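(* For all $n\ge1$, $$a_{\{0101,0102,0120,0121\}}(n)=a_{\{0102,0112,0120,0121\}}(n)=2^{n-1}+\binom{n-1}{2}.$$
   Context: An ascent in an integer sequence $s_1\cdots s_m$ is an index $j$ with $s_j<s_{j+1}$; $\mathrm{asc}$ denotes the number of ascents. An ascent sequence is a sequence $x_1\cdots x_n$ of nonnegative integers with $x_1=0$ and $x_i\le 1+\mathrm{asc}(x_1\cdots x_{i-1})$ for all $i\ge2$. The reduction $\mathrm{red}(w)$ of an integer sequence $w$ replaces the $i$-th smallest distinct letter of $w$ by $i-1$; a pattern is a reduced sequence. A sequence $x$ contains a pattern $p=p_1\cdots p_k$ if there are indices $i_1<\cdots<i_k$ with $\mathrm{red}(x_{i_1}\cdots x_{i_k})=p$; otherwise $x$ avoids $p$. For a finite set $P$ of patterns, $a_P(n)$ denotes the number of ascent sequences of length $n$ avoiding every pattern in $P$. *)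

theory Defs
  imports Main
begin

definition asc :: "nat list \<Rightarrow> nat" where
  "asc s = card {j. Suc j < length s \<and> s ! j < s ! Suc j}"

definition ascent_seq :: "nat list \<Rightarrow> bool" where
  "ascent_seq x \<longleftrightarrow> x \<noteq> [] \<and> x ! 0 = 0 \<and>
     (\<forall>i. 1 \<le> i \<and> i < length x \<longrightarrow> x ! i \<le> 1 + asc (take i x))"

definition red :: "nat list \<Rightarrow> nat list" where
  "red w = map (\<lambda>a. card {b \<in> set w. b < a}) w"

definition contains :: "nat list \<Rightarrow> nat list \<Rightarrow> bool" where
  "contains x p \<longleftrightarrow> (\<exists>ind :: nat \<Rightarrow> nat.
      strict_mono_on {..<length p} ind \<and> (\<forall>k<length p. ind k < length x) \<and>
      red (map (\<lambda>k. x ! ind k) [0..<length p]) = p)"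

definition avoids :: "nat list \<Rightarrow> nat list \<Rightarrow> bool" where
  "avoids x p \<longleftrightarrow> \<not> contains x p"

definition a_count :: "nat list set \<Rightarrow> nat \<Rightarrow> nat" where
  "a_count P n = card {x. length x = n \<and> ascent_seq x \<and> (\<forall>p\<in>P. avoids x p)}"

end

theory Submission
  imports Defs
begin

lemma red_mono_aux:
  fixes a b :: nat
  assumes "a \<in> set w" "b \<in> set w" "a < b"
  shows "card {e \<in> set w. e < a} < card {e \<in> set w. e < b}"
proof (rule psubset_card_mono)
  show "finite {e \<in> set w. e < b}" by simp
  have s: "{e \<in> set w. e < a} \<subseteq> {e \<in> set w. e < b}" using assms(3) by (simp add: Collect_mono_iff)
  have "a \<in> {e \<in> set w. e < b}" using assms by simp
  moreover have "a \<notin> {e \<in> set w. e < a}" by simp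
  ultimately show "{e \<in> set w. e < a} \<subset> {e \<in> set w. e < b}" using s by blast
qed

lemma red_nth: "i < length w \<Longrightarrow> red w ! i = card {e \<in> set w. e < w ! i}"
  by (simp add: red_def)

lemma red_less: "i < length w \<Longrightarrow> j < length w \<Longrightarrow> (red w ! i < red w ! j \<longleftrightarrow> w ! i < w ! j)"
proof -
  assume i: "i < length w" and j: "j < length w"
  have a: "w ! i \<in> set w" "w ! j \<in> set w" using i j by auto
  show ?thesis
  proof (cases "w ! i < w ! j")
    case True
    then show ?thesis using red_mono_aux[OF a True] i j by (simp add: red_nth)
  next
    case False
    then have "w ! j \<le> w ! i" by simp
    then have "card {e \<in> set w. e < w ! j} \<le> card {e \<in> set w. e < w ! i}"
      by (intro card_mono) (simp, simp add: Collect_mono_iff)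
    then show ?thesis using False i j by (simp add: red_nth)
  qed
qed

lemma red_eq: "i < length w \<Longrightarrow> j < length w \<Longrightarrow> (red w ! i = red w ! j \<longleftrightarrow> w ! i = w ! j)"
  using red_less[of i w j] red_less[of j w i] by (metis linorder_neqE_nat order.irrefl)

lemma red4_0101: "red [a,b,c,d] = [0,1,0,1] \<longleftrightarrow> a = c \<and> b = d \<and> a < b"
proof
  assume h: "red [a,b,c,d] = [0,1,0,1]"
  have "a = c" using red_eq[of 0 "[a,b,c,d]" 2] h by simp
  moreover have "b = d" using red_eq[of 1 "[a,b,c,d]" 3] h by simp
  moreover have "a < b" using red_less[of 0 "[a,b,c,d]" 1] h by simp
  ultimately show "a = c \<and> b = d \<and> a < b" by simp
next
  assume "a = c \<and> b = d \<and> a < b"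
  then have e: "c = a" "d = b" "a < b" by auto
  have s: "set [a,b,c,d] = {a,b}" using e by auto
  have 1: "{e \<in> {a,b}. e < a} = {}" using e by auto
  have 2: "{e \<in> {a,b}. e < b} = {a}" using e by auto
  show "red [a,b,c,d] = [0,1,0,1]" unfolding red_def s using e 1 2 by simp
qed

lemma red4_0102: "red [a,b,c,d] = [0,1,0,2] \<longleftrightarrow> a = c \<and> a < b \<and> b < d"
proof
  assume h: "red [a,b,c,d] = [0,1,0,2]"
  have "a = c" using red_eq[of 0 "[a,b,c,d]" 2] h by simp
  moreover have "b < d" using red_less[of 1 "[a,b,c,d]" 3] h by simp
  moreover have "a < b" using red_less[of 0 "[a,b,c,d]" 1] h by simp
  ultimately show "a = c \<and> a < b \<and> b < d" by simp
next
  assume "a = c \<and> a < b \<and> b < d"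
  then have e: "c = a" "a < b" "b < d" by auto
  have s: "set [a,b,c,d] = {a,b,d}" using e by auto
  have 1: "{e \<in> {a,b,d}. e < a} = {}" using e by auto
  have 2: "{e \<in> {a,b,d}. e < b} = {a}" using e by auto
  have 3: "{e \<in> {a,b,d}. e < d} = {a,b}" using e by auto
  show "red [a,b,c,d] = [0,1,0,2]" unfolding red_def s using e 1 2 3 by simp
qed

lemma red4_0120: "red [a,b,c,d] = [0,1,2,0] \<longleftrightarrow> a = d \<and> a < b \<and> b < c"
proof
  assume h: "red [a,b,c,d] = [0,1,2,0]"
  have "a = d" using red_eq[of 0 "[a,b,c,d]" 3] h by simp
  moreover have "b < c" using red_less[of 1 "[a,b,c,d]" 2] h by simp
  moreover have "a < b" using red_less[of 0 "[a,b,c,d]" 1] h by simp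
  ultimately show "a = d \<and> a < b \<and> b < c" by simp
next
  assume "a = d \<and> a < b \<and> b < c"
  then have e: "d = a" "a < b" "b < c" by auto
  have s: "set [a,b,c,d] = {a,b,c}" using e by auto
  have 1: "{e \<in> {a,b,c}. e < a} = {}" using e by auto
  have 2: "{e \<in> {a,b,c}. e < b} = {a}" using e by auto
  have 3: "{e \<in> {a,b,c}. e < c} = {a,b}" using e by auto
  show "red [a,b,c,d] = [0,1,2,0]" unfolding red_def s using e 1 2 3 by simp
qed

lemma red4_0121: "red [a,b,c,d] = [0,1,2,1] \<longleftrightarrow> b = d \<and> a < b \<and> b < c"
proof
  assume h: "red [a,b,c,d] = [0,1,2,1]"
  have "b = d" using red_eq[of 1 "[a,b,c,d]" 3] h by simp
  moreover have "b < c" using red_less[of 1 "[a,b,c,d]" 2] h by simp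
  moreover have "a < b" using red_less[of 0 "[a,b,c,d]" 1] h by simp
  ultimately show "b = d \<and> a < b \<and> b < c" by simp
next
  assume "b = d \<and> a < b \<and> b < c"
  then have e: "d = b" "a < b" "b < c" by auto
  have s: "set [a,b,c,d] = {a,b,c}" using e by auto
  have 1: "{e \<in> {a,b,c}. e < a} = {}" using e by auto
  have 2: "{e \<in> {a,b,c}. e < b} = {a}" using e by auto
  have 3: "{e \<in> {a,b,c}. e < c} = {a,b}" using e by auto
  show "red [a,b,c,d] = [0,1,2,1]" unfolding red_def s using e 1 2 3 by simp
qed

lemma red4_0112: "red [a,b,c,d] = [0,1,1,2] \<longleftrightarrow> b = c \<and> a < b \<and> b < d"
proof
  assume h: "red [a,b,c,d] = [0,1,1,2]"
  have "b = c" using red_eq[of 1 "[a,b,c,d]" 2] h by simp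
  moreover have "b < d" using red_less[of 1 "[a,b,c,d]" 3] h by simp
  moreover have "a < b" using red_less[of 0 "[a,b,c,d]" 1] h by simp
  ultimately show "b = c \<and> a < b \<and> b < d" by simp
next
  assume "b = c \<and> a < b \<and> b < d"
  then have e: "c = b" "a < b" "b < d" by auto
  have s: "set [a,b,c,d] = {a,b,d}" using e by auto
  have 1: "{e \<in> {a,b,d}. e < a} = {}" using e by auto
  have 2: "{e \<in> {a,b,d}. e < b} = {a}" using e by auto
  have 3: "{e \<in> {a,b,d}. e < d} = {a,b}" using e by auto
  show "red [a,b,c,d] = [0,1,1,2]" unfolding red_def s using e 1 2 3 by simp
qed

lemma upt4: "[0..<4] = [0,1,2,3::nat]" by (simp add: upt_rec)

lemma contains4:
  assumes "length p = 4"
  shows "contains x p \<longleftrightarrow> (\<exists>i j k l. i < j \<and> j < k \<and> k < l \<and> l < length x \<and>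
            red [x!i, x!j, x!k, x!l] = p)"
proof
  assume "contains x p"
  then obtain ind where m: "strict_mono_on {..<4} ind" and b: "\<forall>k<4. ind k < length x"
    and r: "red (map (\<lambda>k. x ! ind k) [0..<4]) = p"
    using assms unfolding contains_def by auto
  have "ind 0 < ind 1" "ind 1 < ind 2" "ind 2 < ind 3"
    using m unfolding strict_mono_on_def by auto
  moreover have "ind 3 < length x" using b by simp
  moreover have "red [x!ind 0, x!ind 1, x!ind 2, x!ind 3] = p" using r by (simp add: upt4)
  ultimately show "\<exists>i j k l. i < j \<and> j < k \<and> k < l \<and> l < length x \<and> red [x!i, x!j, x!k, x!l] = p"
    by blast
next
  assume "\<exists>i j k l. i < j \<and> j < k \<and> k < l \<and> l < length x \<and> red [x!i, x!j, x!k, x!l] = p"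
  then obtain i j k l where h: "i < j" "j < k" "k < l" "l < length x" "red [x!i, x!j, x!k, x!l] = p"
    by blast
  define ind where "ind = (\<lambda>t::nat. if t = 0 then i else if t = 1 then j else if t = 2 then k else l)"
  have m: "strict_mono_on {..<4} ind"
    unfolding strict_mono_on_def ind_def using h by auto
  have b: "\<forall>t<4. ind t < length x" unfolding ind_def using h by auto
  have r: "red (map (\<lambda>t. x ! ind t) [0..<4]) = p" using h(5) by (simp add: upt4 ind_def)
  show "contains x p" unfolding contains_def using assms m b r by auto
qed

lemma length_0101: "length [0,1,0,1::nat] = 4" by simp
lemma c0101: "contains x [0,1,0,1] \<longleftrightarrow> (\<exists>i j k l. i < j \<and> j < k \<and> k < l \<and> l < length x \<and>
   x!i = x!k \<and> x!j = x!l \<and> x!i < x!j)"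
  unfolding contains4[OF length_0101] red4_0101 ..
lemma length_0102: "length [0,1,0,2::nat] = 4" by simp
lemma c0102: "contains x [0,1,0,2] \<longleftrightarrow> (\<exists>i j k l. i < j \<and> j < k \<and> k < l \<and> l < length x \<and>
   x!i = x!k \<and> x!i < x!j \<and> x!j < x!l)"
  unfolding contains4[OF length_0102] red4_0102 ..
lemma length_0120: "length [0,1,2,0::nat] = 4" by simp
lemma c0120: "contains x [0,1,2,0] \<longleftrightarrow> (\<exists>i j k l. i < j \<and> j < k \<and> k < l \<and> l < length x \<and>
   x!i = x!l \<and> x!i < x!j \<and> x!j < x!k)"
  unfolding contains4[OF length_0120] red4_0120 ..
lemma length_0121: "length [0,1,2,1::nat] = 4" by simp
lemma c0121: "contains x [0,1,2,1] \<longleftrightarrow> (\<exists>i j k l. i < j \<and> j < k \<and> k < l \<and> l < length x \<and>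
   x!j = x!l \<and> x!i < x!j \<and> x!j < x!k)"
  unfolding contains4[OF length_0121] red4_0121 ..
lemma length_0112: "length [0,1,1,2::nat] = 4" by simp
lemma c0112: "contains x [0,1,1,2] \<longleftrightarrow> (\<exists>i j k l. i < j \<and> j < k \<and> k < l \<and> l < length x \<and>
   x!j = x!k \<and> x!i < x!j \<and> x!j < x!l)"
  unfolding contains4[OF length_0112] red4_0112 ..


lemma asc_snoc:
  assumes "s \<noteq> []"
  shows "asc (s @ [v]) = asc s + (if last s < v then 1 else 0)"
proof -
  let ?A = "{j. Suc j < length s \<and> s ! j < s ! Suc j}"
  let ?B = "{j. j = length s - 1 \<and> last s < v}"
  have e: "{j. Suc j < length (s @ [v]) \<and> (s @ [v]) ! j < (s @ [v]) ! Suc j} = ?A \<union> ?B"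
  proof (rule set_eqI)
    fix j
    show "j \<in> {j. Suc j < length (s @ [v]) \<and> (s @ [v]) ! j < (s @ [v]) ! Suc j} \<longleftrightarrow> j \<in> ?A \<union> ?B"
    proof (cases "Suc j < length s")
      case True
      then show ?thesis by (auto simp: nth_append)
    next
      case False
      show ?thesis
      proof (cases "Suc j = length s")
        case True
        then have j: "j = length s - 1" by simp
        have "(s @ [v]) ! j = last s" using True assms by (simp add: nth_append last_conv_nth j)
        moreover have "(s @ [v]) ! Suc j = v" using True by (simp add: nth_append)
        ultimately show ?thesis using True j by simp
      next
        case False
        then have "\<not> Suc j < length (s @ [v])" "j \<noteq> length s - 1" using \<open>\<not> Suc j < length s\<close> assms by auto
        then show ?thesis using \<open>\<not> Suc j < length s\<close> by simp
      qed
    qed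
  qed
  have d: "?A \<inter> ?B = {}" by auto
  have fA: "finite ?A" by (rule finite_subset[of _ "{..<length s}"]) auto
  have fB: "finite ?B" by (rule finite_subset[of _ "{length s - 1}"]) auto
  have cB: "card ?B = (if last s < v then 1 else 0)" by auto
  show ?thesis unfolding asc_def e using card_Un_disjoint[OF fA fB d] cB by simp
qed

lemma asc_single: "asc [a] = 0"
  by (simp add: asc_def)

lemma asc_take_le:
  "Suc t \<le> length x \<Longrightarrow> (\<forall>m<t. x!m \<le> x!Suc m) \<Longrightarrow> asc (take (Suc t) x) + x!0 \<le> x!t"
proof (induction t)
  case 0
  then have "take (Suc 0) x = [x!0]" by (cases x) auto
  then show ?case by (simp add: asc_single)
next
  case (Suc t)
  have tk: "take (Suc (Suc t)) x = take (Suc t) x @ [x ! Suc t]"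
    using Suc.prems(1) by (simp add: take_Suc_conv_app_nth)
  have ne: "take (Suc t) x \<noteq> []" using Suc.prems(1) by (cases x) auto
  have l: "last (take (Suc t) x) = x ! t" using Suc.prems(1) ne by (simp add: last_conv_nth min_def)
  have IH: "asc (take (Suc t) x) + x!0 \<le> x!t" using Suc by auto
  have m: "x!t \<le> x!Suc t" using Suc.prems(2) by auto
  show ?case unfolding tk asc_snoc[OF ne] l using IH m by auto
qed

lemma asc_take_eq:
  "Suc t \<le> length x \<Longrightarrow> (\<forall>m<t. x!Suc m = x!m \<or> x!Suc m = Suc (x!m)) \<Longrightarrow> asc (take (Suc t) x) + x!0 = x!t"
proof (induction t)
  case 0
  then have "take (Suc 0) x = [x!0]" by (cases x) auto
  then show ?case by (simp add: asc_single)
next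
  case (Suc t)
  have tk: "take (Suc (Suc t)) x = take (Suc t) x @ [x ! Suc t]"
    using Suc.prems(1) by (simp add: take_Suc_conv_app_nth)
  have ne: "take (Suc t) x \<noteq> []" using Suc.prems(1) by (cases x) auto
  have l: "last (take (Suc t) x) = x ! t" using Suc.prems(1) ne by (simp add: last_conv_nth min_def)
  have IH: "asc (take (Suc t) x) + x!0 = x!t" using Suc by auto
  have m: "x!Suc t = x!t \<or> x!Suc t = Suc (x!t)" using Suc.prems(2) by auto
  show ?case unfolding tk asc_snoc[OF ne] l using IH m by auto
qed

lemma mono_steps:
  fixes f :: "nat \<Rightarrow> nat"
  assumes "\<forall>m. Suc m < n \<longrightarrow> f m \<le> f (Suc m)" "a \<le> b" "b < n"
  shows "f a \<le> f b"
  using assms(2,3)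
proof (induction b)
  case 0
  then show ?case by simp
next
  case (Suc b)
  show ?case
  proof (cases "a = Suc b")
    case True
    then show ?thesis by simp
  next
    case False
    then have "a \<le> b" using Suc.prems by simp
    then have "f a \<le> f b" using Suc by simp
    also have "f b \<le> f (Suc b)" using assms(1) Suc.prems by simp
    finally show ?thesis .
  qed
qed

definition steps01 :: "nat list \<Rightarrow> bool" where
  "steps01 x \<longleftrightarrow> (\<forall>m. Suc m < length x \<longrightarrow> x!Suc m = x!m \<or> x!Suc m = Suc (x!m))"

lemma steps01_ascent:
  assumes "steps01 x" "x \<noteq> []" "x!0 = 0"
  shows "ascent_seq x"
  unfolding ascent_seq_def
proof (intro conjI allI impI)
  show "x \<noteq> []" "x!0 = 0" using assms by auto
  fix i assume i: "1 \<le> i \<and> i < length x"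
  then obtain t where t: "i = Suc t" by (cases i) auto
  have "asc (take (Suc t) x) + x!0 = x!t"
    by (rule asc_take_eq) (use i t assms(1) in \<open>auto simp: steps01_def\<close>)
  moreover have "x!Suc t \<le> Suc (x!t)" using assms(1) i t unfolding steps01_def by force
  ultimately show "x ! i \<le> 1 + asc (take i x)" using t assms(3) by simp
qed

lemma le1_ascent:
  assumes "x \<noteq> []" "x!0 = 0" "\<forall>t<length x. x!t \<le> 1"
  shows "ascent_seq x"
  unfolding ascent_seq_def using assms by force

lemma steps01_mono:
  assumes "steps01 x" "a \<le> b" "b < length x"
  shows "x!a \<le> x!b"
  using mono_steps[of "length x" "\<lambda>t. x!t" a b] assms unfolding steps01_def by force

lemma ivt:
  "x!0 = 0 \<Longrightarrow> (\<forall>m<q. x!Suc m \<le> Suc (x!m)) \<Longrightarrow> v \<le> x!q \<Longrightarrow> \<exists>t\<le>q. x!t = v"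
proof (induction q)
  case 0
  then show ?case by simp
next
  case (Suc q)
  show ?case
  proof (cases "v \<le> x!q")
    case True
    then obtain t where "t \<le> q" "x!t = v" using Suc by auto
    then show ?thesis by (intro exI[of _ t]) simp
  next
    case False
    then have "v = x!Suc q" using Suc.prems by force
    then show ?thesis by (intro exI[of _ "Suc q"]) simp
  qed
qed



lemma no_inv_0101: "steps01 x \<Longrightarrow> \<not> contains x [0,1,0,1]"
proof
  assume s: "steps01 x" and "contains x [0,1,0,1]"
  then obtain i j k l where h: "i < j" "j < k" "k < l" "l < length x" "x!i = x!k" "x!j = x!l" "x!i < x!j"
    unfolding c0101 by blast
  have "x!j \<le> x!k" using steps01_mono[OF s, of j k] h by simp
  then show False using h by simp
qed
lemma no_inv_0102: "steps01 x \<Longrightarrow> \<not> contains x [0,1,0,2]"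
proof
  assume s: "steps01 x" and "contains x [0,1,0,2]"
  then obtain i j k l where h: "i < j" "j < k" "k < l" "l < length x" "x!i = x!k" "x!i < x!j" "x!j < x!l"
    unfolding c0102 by blast
  have "x!j \<le> x!k" using steps01_mono[OF s, of j k] h by simp
  then show False using h by simp
qed
lemma no_inv_0120: "steps01 x \<Longrightarrow> \<not> contains x [0,1,2,0]"
proof
  assume s: "steps01 x" and "contains x [0,1,2,0]"
  then obtain i j k l where h: "i < j" "j < k" "k < l" "l < length x" "x!i = x!l" "x!i < x!j" "x!j < x!k"
    unfolding c0120 by blast
  have "x!k \<le> x!l" using steps01_mono[OF s, of k l] h by simp
  then show False using h by simp
qed
lemma no_inv_0121: "steps01 x \<Longrightarrow> \<not> contains x [0,1,2,1]"
proof
  assume s: "steps01 x" and "contains x [0,1,2,1]"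
  then obtain i j k l where h: "i < j" "j < k" "k < l" "l < length x" "x!j = x!l" "x!i < x!j" "x!j < x!k"
    unfolding c0121 by blast
  have "x!k \<le> x!l" using steps01_mono[OF s, of k l] h by simp
  then show False using h by simp
qed

lemma le1_0102: "\<forall>t<length x. x!t \<le> 1 \<Longrightarrow> \<not> contains x [0,1,0,2]"
proof
  assume s: "\<forall>t<length x. x!t \<le> 1" and "contains x [0,1,0,2]"
  then obtain i j k l where h: "i < j" "j < k" "k < l" "l < length x" "x!i = x!k" "x!i < x!j" "x!j < x!l"
    unfolding c0102 by blast
  have "x!l \<le> 1" using s h by simp
  then show False using h by simp
qed
lemma le1_0112: "\<forall>t<length x. x!t \<le> 1 \<Longrightarrow> \<not> contains x [0,1,1,2]"
proof
  assume s: "\<forall>t<length x. x!t \<le> 1" and "contains x [0,1,1,2]"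
  then obtain i j k l where h: "i < j" "j < k" "k < l" "l < length x" "x!j = x!k" "x!i < x!j" "x!j < x!l"
    unfolding c0112 by blast
  have "x!l \<le> 1" using s h by simp
  then show False using h by simp
qed
lemma le1_0120: "\<forall>t<length x. x!t \<le> 1 \<Longrightarrow> \<not> contains x [0,1,2,0]"
proof
  assume s: "\<forall>t<length x. x!t \<le> 1" and "contains x [0,1,2,0]"
  then obtain i j k l where h: "i < j" "j < k" "k < l" "l < length x" "x!i = x!l" "x!i < x!j" "x!j < x!k"
    unfolding c0120 by blast
  have "x!k \<le> 1" using s h by simp
  then show False using h by simp
qed
lemma le1_0121: "\<forall>t<length x. x!t \<le> 1 \<Longrightarrow> \<not> contains x [0,1,2,1]"
proof
  assume s: "\<forall>t<length x. x!t \<le> 1" and "contains x [0,1,2,1]"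
  then obtain i j k l where h: "i < j" "j < k" "k < l" "l < length x" "x!j = x!l" "x!i < x!j" "x!j < x!k"
    unfolding c0121 by blast
  have "x!k \<le> 1" using s h by simp
  then show False using h by simp
qed

definition gA1 :: "nat \<Rightarrow> nat set \<Rightarrow> nat list" where
  "gA1 n S = map (\<lambda>t. card (S \<inter> {1..t})) [0..<n]"
definition gA2 :: "nat \<Rightarrow> nat \<Rightarrow> nat \<Rightarrow> nat list" where
  "gA2 n i j = map (\<lambda>t. if i \<le> t \<and> t < j then 1 else 0) [0..<n]"
definition gB1 :: "nat \<Rightarrow> nat set \<Rightarrow> nat list" where
  "gB1 n S = map (\<lambda>t. if t \<in> S then 1 else 0) [0..<n]"
definition gB2 :: "nat \<Rightarrow> nat \<Rightarrow> nat \<Rightarrow> nat list" where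
  "gB2 n i j = map (\<lambda>t. if t < i then 0 else if t \<le> j then t - i + 1 else j - i + 1) [0..<n]"
definition PP :: "nat \<Rightarrow> (nat \<times> nat) set" where
  "PP n = {(i,j). 0 < i \<and> i < j \<and> j < n}"

lemma card_step: "card (S \<inter> {1..Suc t}) = card (S \<inter> {1..t}) + (if Suc t \<in> S then 1 else 0)"
proof -
  have e: "{1..Suc t} = insert (Suc t) {1..t}" by auto
  show ?thesis
  proof (cases "Suc t \<in> S")
    case True
    then have "S \<inter> {1..Suc t} = insert (Suc t) (S \<inter> {1..t})" using e by auto
    then show ?thesis using True by simp
  next
    case False
    then have "S \<inter> {1..Suc t} = S \<inter> {1..t}" using e by auto
    then show ?thesis using False by simp
  qed
qed

lemma gA1_len: "length (gA1 n S) = n" by (simp add: gA1_def)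
lemma gA1_nth: "t < n \<Longrightarrow> gA1 n S ! t = card (S \<inter> {1..t})" by (simp add: gA1_def)
lemma gA1_0: "0 < n \<Longrightarrow> gA1 n S ! 0 = 0" by (simp add: gA1_nth)
lemma gA1_steps: "steps01 (gA1 n S)"
  unfolding steps01_def gA1_len
proof (intro allI impI)
  fix m assume m: "Suc m < n"
  have "card (S \<inter> {1..Suc m}) = card (S \<inter> {1..m}) + (if Suc m \<in> S then 1 else 0)" by (rule card_step)
  then show "gA1 n S ! Suc m = gA1 n S ! m \<or> gA1 n S ! Suc m = Suc (gA1 n S ! m)"
    using m by (simp add: gA1_nth split: if_splits)
qed

lemma gA2_len: "length (gA2 n i j) = n" by (simp add: gA2_def)
lemma gA2_nth: "t < n \<Longrightarrow> gA2 n i j ! t = (if i \<le> t \<and> t < j then 1 else 0)" by (simp add: gA2_def)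

lemma gA2_0101: "0 < i \<Longrightarrow> \<not> contains (gA2 n i j) [0,1,0,1]"
proof
  assume "contains (gA2 n i j) [0,1,0,1]"
  then obtain a b c d where h: "a < b" "b < c" "c < d" "d < n"
    "gA2 n i j ! a = gA2 n i j ! c" "gA2 n i j ! b = gA2 n i j ! d" "gA2 n i j ! a < gA2 n i j ! b"
    unfolding c0101 gA2_len by blast
  have "a < n" "b < n" "c < n" using h by auto
  then show False using h by (auto simp: gA2_nth split: if_splits)
qed

lemma inA_1: "S \<subseteq> {1..<n} \<Longrightarrow> 0 < n \<Longrightarrow> gA1 n S \<in> {x. length x = n \<and> ascent_seq x \<and>
   (\<forall>p\<in>{[0,1,0,1], [0,1,0,2], [0,1,2,0], [0,1,2,1]}. avoids x p)}"
proof -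
  assume "S \<subseteq> {1..<n}" and n: "0 < n"
  have a: "ascent_seq (gA1 n S)"
    by (rule steps01_ascent) (use gA1_steps[of n S] gA1_0[OF n, of S] gA1_len[of n S] n in auto)
  have "\<not> contains (gA1 n S) [0,1,0,1]" "\<not> contains (gA1 n S) [0,1,0,2]"
       "\<not> contains (gA1 n S) [0,1,2,0]" "\<not> contains (gA1 n S) [0,1,2,1]"
    using gA1_steps no_inv_0101 no_inv_0102 no_inv_0120 no_inv_0121 by blast+
  then have "\<forall>p\<in>{[0,1,0,1], [0,1,0,2], [0,1,2,0], [0,1,2,1]}. avoids (gA1 n S) p"
    unfolding avoids_def by blast
  then show ?thesis using a gA1_len by blast
qed

lemma inA_2: "(i,j) \<in> PP n \<Longrightarrow> gA2 n i j \<in> {x. length x = n \<and> ascent_seq x \<and>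
   (\<forall>p\<in>{[0,1,0,1], [0,1,0,2], [0,1,2,0], [0,1,2,1]}. avoids x p)}"
proof -
  assume "(i,j) \<in> PP n"
  then have ij: "0 < i" "i < j" "j < n" by (auto simp: PP_def)
  have le: "\<forall>t<length (gA2 n i j). gA2 n i j ! t \<le> 1" by (simp add: gA2_len gA2_nth)
  have ne: "gA2 n i j \<noteq> []" using ij gA2_len[of n i j] by auto
  have z: "gA2 n i j ! 0 = 0" using ij by (simp add: gA2_nth)
  have a: "ascent_seq (gA2 n i j)" by (rule le1_ascent[OF ne z le])
  have "\<not> contains (gA2 n i j) [0,1,0,1]" "\<not> contains (gA2 n i j) [0,1,0,2]"
       "\<not> contains (gA2 n i j) [0,1,2,0]" "\<not> contains (gA2 n i j) [0,1,2,1]"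
    using gA2_0101[OF ij(1)] le1_0102[OF le] le1_0120[OF le] le1_0121[OF le] by blast+
  then have "\<forall>p\<in>{[0,1,0,1], [0,1,0,2], [0,1,2,0], [0,1,2,1]}. avoids (gA2 n i j) p"
    unfolding avoids_def by blast
  then show ?thesis using a gA2_len by blast
qed



lemma A_sub:
  assumes len: "length x = n" and as: "ascent_seq x"
    and n1: "\<not> contains x [0,1,0,1]" and n2: "\<not> contains x [0,1,0,2]"
    and n3: "\<not> contains x [0,1,2,0]" and n4: "\<not> contains x [0,1,2,1]"
  shows "x \<in> gA1 n ` Pow {1..<n} \<union> (\<lambda>(i,j). gA2 n i j) ` PP n"
proof -
  have x0: "x!0 = 0" and ne: "x \<noteq> []" using as unfolding ascent_seq_def by auto
  have ab: "\<And>i. 1 \<le> i \<Longrightarrow> i < n \<Longrightarrow> x!i \<le> 1 + asc (take i x)"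
    using as len unfolding ascent_seq_def by auto
  have bound: "x!Suc t \<le> Suc (x!t)" if "Suc t < n" "\<forall>m<t. x!m \<le> x!Suc m" for t
  proof -
    have "asc (take (Suc t) x) + x!0 \<le> x!t" by (rule asc_take_le) (use that len in auto)
    moreover have "x!Suc t \<le> 1 + asc (take (Suc t) x)" using ab[of "Suc t"] that by simp
    ultimately show ?thesis using x0 by simp
  qed
  show ?thesis
  proof (cases "\<forall>m. Suc m < n \<longrightarrow> x!m \<le> x!Suc m")
    case True
    have st: "x!Suc m = x!m \<or> x!Suc m = Suc (x!m)" if "Suc m < n" for m
      using bound[of m] True that by force
    define S where "S = {t\<in>{1..<n}. x!t \<noteq> x!(t-1)}"
    have val: "t < n \<Longrightarrow> x!t = card (S \<inter> {1..t})" for t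
    proof (induction t)
      case 0
      then show ?case using x0 by simp
    next
      case (Suc t)
      have c: "card (S \<inter> {1..Suc t}) = card (S \<inter> {1..t}) + (if Suc t \<in> S then 1 else 0)"
        by (rule card_step)
      have m: "Suc t \<in> S \<longleftrightarrow> x!Suc t \<noteq> x!t" using Suc.prems by (simp add: S_def)
      show ?case using c m Suc st[of t] by auto
    qed
    have "x = gA1 n S"
      by (rule nth_equalityI) (simp_all add: len gA1_len gA1_nth val)
    moreover have "S \<in> Pow {1..<n}" by (auto simp: S_def)
    ultimately show ?thesis by blast
  next
    case False
    then have "\<exists>q. Suc q < n \<and> x!Suc q < x!q" by (auto simp: not_le)
    then obtain q where q: "Suc q < n" "x!Suc q < x!q"
      and qmin: "\<forall>m<q. \<not> (Suc m < n \<and> x!Suc m < x!m)"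
      using exists_least_iff[of "\<lambda>q. Suc q < n \<and> x!Suc q < x!q"] by blast
    have mpre: "\<forall>m<q. x!m \<le> x!Suc m" using qmin q(1) by (auto simp: not_less)
    have stp: "\<forall>m<q. x!Suc m \<le> Suc (x!m)"
    proof (intro allI impI)
      fix m assume "m < q"
      then show "x!Suc m \<le> Suc (x!m)" using bound[of m] mpre q(1) by simp
    qed
    have monoq: "x!a \<le> x!b" if "a \<le> b" "b \<le> q" for a b
      using mono_steps[of "Suc q" "\<lambda>t. x!t" a b] mpre that by auto
    show ?thesis
    proof (cases "1 \<le> x!Suc q")
      case True
      obtain t0 where t0: "t0 \<le> q" "x!t0 = x!Suc q" using ivt[OF x0 stp, of "x!Suc q"] q(2) by auto
      have "t0 \<noteq> 0" using t0 x0 True by (cases t0) auto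
      moreover have "t0 \<noteq> q" using t0 q by auto
      ultimately have "contains x [0,1,2,1]" unfolding c0121
        using t0 q True x0 len by (intro exI[of _ 0] exI[of _ t0] exI[of _ q] exI[of _ "Suc q"]) auto
      then show ?thesis using n4 by simp
    next
      case False
      then have v0: "x!Suc q = 0" by simp
      show ?thesis
      proof (cases "2 \<le> x!q")
        case True
        obtain t1 where t1: "t1 \<le> q" "x!t1 = 1" using ivt[OF x0 stp, of 1] True by auto
        have "t1 \<noteq> 0" using t1 x0 by (cases t1) auto
        moreover have "t1 \<noteq> q" using t1 True by auto
        ultimately have "contains x [0,1,2,0]" unfolding c0120
          using t1 q True x0 v0 len by (intro exI[of _ 0] exI[of _ t1] exI[of _ q] exI[of _ "Suc q"]) auto
        then show ?thesis using n3 by simp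
      next
        case False
        then have m1: "x!q = 1" using q v0 by simp
        have "\<exists>t. t \<le> q \<and> x!t = 1" using m1 by auto
        then obtain i0 where i0: "i0 \<le> q" "x!i0 = 1" and imin: "\<forall>t<i0. \<not> (t \<le> q \<and> x!t = 1)"
          using exists_least_iff[of "\<lambda>t. t \<le> q \<and> x!t = 1"] by blast
        have ipos: "0 < i0" using i0 x0 by (cases i0) auto
        have val: "x!t = (if i0 \<le> t \<and> t < Suc q then 1 else 0)" if "t < n" for t
        proof -
          consider "t < i0" | "i0 \<le> t \<and> t \<le> q" | "t = Suc q" | "Suc q < t" by linarith
          then show ?thesis
          proof cases
            case 1
            then have "x!t \<le> 1" using monoq[of t q] m1 i0 by simp
            moreover have "x!t \<noteq> 1" using imin 1 i0 by auto
            ultimately show ?thesis using 1 by simp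
          next
            case 2
            then have "x!i0 \<le> x!t" "x!t \<le> x!q" using monoq by auto
            then show ?thesis using 2 i0 m1 by simp
          next
            case 3
            then show ?thesis using v0 by simp
          next
            case 4
            have "x!t = 0"
            proof (rule ccontr)
              assume nz: "x!t \<noteq> 0"
              show False
              proof (cases "x!t = 1")
                case True
                have "contains x [0,1,0,1]" unfolding c0101
                  using 4 i0 q True x0 v0 len that ipos
                  by (intro exI[of _ 0] exI[of _ i0] exI[of _ "Suc q"] exI[of _ t]) auto
                then show False using n1 by simp
              next
                case False
                have "contains x [0,1,0,2]" unfolding c0102
                  using 4 i0 q False nz x0 v0 len that ipos
                  by (intro exI[of _ 0] exI[of _ i0] exI[of _ "Suc q"] exI[of _ t]) auto
                then show False using n2 by simp
              qed
            qed
            then show ?thesis using 4 by simp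
          qed
        qed
        have "x = gA2 n i0 (Suc q)"
          by (rule nth_equalityI) (simp_all add: len gA2_len gA2_nth val)
        moreover have "(i0, Suc q) \<in> PP n" using ipos i0 q by (simp add: PP_def)
        ultimately show ?thesis by force
      qed
    qed
  qed
qed



lemma gB1_len: "length (gB1 n S) = n" by (simp add: gB1_def)
lemma gB1_nth: "t < n \<Longrightarrow> gB1 n S ! t = (if t \<in> S then 1 else 0)" by (simp add: gB1_def)
lemma gB2_len: "length (gB2 n i j) = n" by (simp add: gB2_def)
lemma gB2_nth: "t < n \<Longrightarrow> gB2 n i j ! t = (if t < i then 0 else if t \<le> j then t - i + 1 else j - i + 1)"
  by (simp add: gB2_def)

lemma gB2_steps: "0 < i \<Longrightarrow> i < j \<Longrightarrow> steps01 (gB2 n i j)"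
  unfolding steps01_def gB2_len
proof (intro allI impI)
  fix m assume "0 < i" "i < j" "Suc m < n"
  then show "gB2 n i j ! Suc m = gB2 n i j ! m \<or> gB2 n i j ! Suc m = Suc (gB2 n i j ! m)"
    by (simp add: gB2_nth; arith)
qed

lemma gB2_0112:
  assumes "0 < i" "i < j"
  shows "\<not> contains (gB2 n i j) [0,1,1,2]"
proof
  assume "contains (gB2 n i j) [0,1,1,2]"
  then obtain a b c d where h: "a < b" "b < c" "c < d" "d < n"
    "gB2 n i j ! b = gB2 n i j ! c" "gB2 n i j ! a < gB2 n i j ! b" "gB2 n i j ! b < gB2 n i j ! d"
    unfolding c0112 gB2_len by blast
  have "a < n" "b < n" "c < n" using h by auto
  then show False using h assms by (auto simp: gB2_nth split: if_splits)
qed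

lemma inB_1: "S \<subseteq> {1..<n} \<Longrightarrow> 0 < n \<Longrightarrow> gB1 n S \<in> {x. length x = n \<and> ascent_seq x \<and>
   (\<forall>p\<in>{[0,1,0,2], [0,1,1,2], [0,1,2,0], [0,1,2,1]}. avoids x p)}"
proof -
  assume S: "S \<subseteq> {1..<n}" and n: "0 < n"
  have le: "\<forall>t<length (gB1 n S). gB1 n S ! t \<le> 1" by (simp add: gB1_len gB1_nth)
  have ne: "gB1 n S \<noteq> []" using n gB1_len[of n S] by auto
  have "0 \<notin> S" using S by auto
  then have z: "gB1 n S ! 0 = 0" using n by (simp add: gB1_nth)
  have a: "ascent_seq (gB1 n S)" by (rule le1_ascent[OF ne z le])
  have "\<not> contains (gB1 n S) [0,1,0,2]" "\<not> contains (gB1 n S) [0,1,1,2]"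
       "\<not> contains (gB1 n S) [0,1,2,0]" "\<not> contains (gB1 n S) [0,1,2,1]"
    using le1_0112[OF le] le1_0102[OF le] le1_0120[OF le] le1_0121[OF le] by blast+
  then have "\<forall>p\<in>{[0,1,0,2], [0,1,1,2], [0,1,2,0], [0,1,2,1]}. avoids (gB1 n S) p"
    unfolding avoids_def by blast
  then show ?thesis using a gB1_len by blast
qed

lemma inB_2: "(i,j) \<in> PP n \<Longrightarrow> gB2 n i j \<in> {x. length x = n \<and> ascent_seq x \<and>
   (\<forall>p\<in>{[0,1,0,2], [0,1,1,2], [0,1,2,0], [0,1,2,1]}. avoids x p)}"
proof -
  assume "(i,j) \<in> PP n"
  then have ij: "0 < i" "i < j" "j < n" by (auto simp: PP_def)
  have s: "steps01 (gB2 n i j)" using gB2_steps ij by blast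
  have ne: "gB2 n i j \<noteq> []" using ij gB2_len[of n i j] by auto
  have z: "gB2 n i j ! 0 = 0" using ij by (simp add: gB2_nth)
  have a: "ascent_seq (gB2 n i j)" by (rule steps01_ascent[OF s ne z])
  have "\<not> contains (gB2 n i j) [0,1,0,2]" "\<not> contains (gB2 n i j) [0,1,1,2]"
       "\<not> contains (gB2 n i j) [0,1,2,0]" "\<not> contains (gB2 n i j) [0,1,2,1]"
    using gB2_0112[OF ij(1,2)] no_inv_0102[OF s] no_inv_0120[OF s] no_inv_0121[OF s] by blast+
  then have "\<forall>p\<in>{[0,1,0,2], [0,1,1,2], [0,1,2,0], [0,1,2,1]}. avoids (gB2 n i j) p"
    unfolding avoids_def by blast
  then show ?thesis using a gB2_len by blast
qed

lemma B_sub: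
  assumes len: "length x = n" and as: "ascent_seq x"
    and n2: "\<not> contains x [0,1,0,2]" and n5: "\<not> contains x [0,1,1,2]"
    and n3: "\<not> contains x [0,1,2,0]" and n4: "\<not> contains x [0,1,2,1]"
  shows "x \<in> gB1 n ` Pow {1..<n} \<union> (\<lambda>(i,j). gB2 n i j) ` PP n"
proof -
  have x0: "x!0 = 0" and ne: "x \<noteq> []" using as unfolding ascent_seq_def by auto
  have ab: "\<And>i. 1 \<le> i \<Longrightarrow> i < n \<Longrightarrow> x!i \<le> 1 + asc (take i x)"
    using as len unfolding ascent_seq_def by auto
  show ?thesis
  proof (cases "\<forall>t<n. x!t \<le> 1")
    case True
    define S where "S = {t\<in>{1..<n}. x!t = 1}"
    have "x = gB1 n S"
    proof (rule nth_equalityI)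
      show "length x = length (gB1 n S)" by (simp add: len gB1_len)
      fix t assume "t < length x"
      then have t: "t < n" using len by simp
      show "x!t = gB1 n S ! t"
      proof (cases "t = 0")
        case True
        then show ?thesis using t x0 by (simp add: gB1_nth S_def)
      next
        case False
        then show ?thesis using t \<open>\<forall>t<n. x!t \<le> 1\<close> by (auto simp: gB1_nth S_def)
      qed
    qed
    moreover have "S \<in> Pow {1..<n}" by (auto simp: S_def)
    ultimately show ?thesis by blast
  next
    case False
    then have "\<exists>p. p < n \<and> 2 \<le> x!p" by (auto simp: not_le)
    then obtain p where p: "p < n" "2 \<le> x!p" and pmin: "\<forall>t<p. \<not> (t < n \<and> 2 \<le> x!t)"
      using exists_least_iff[of "\<lambda>p. p < n \<and> 2 \<le> x!p"] by blast
    have pre: "\<forall>t<p. x!t \<le> 1" using pmin p(1) by auto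
    have p0: "p \<noteq> 0" using p x0 by (cases p) auto
    have ex1: "\<exists>t. t < p \<and> x!t = 1"
    proof (rule ccontr)
      assume "\<not> (\<exists>t. t < p \<and> x!t = 1)"
      then have z: "\<forall>t<p. x!t = 0" using pre by force
      obtain r where r: "p = Suc r" using p0 by (cases p) auto
      have "asc (take (Suc r) x) + x!0 \<le> x!r" by (rule asc_take_le) (use r p len z in auto)
      then have "asc (take p x) = 0" using z r by simp
      then have "x!p \<le> 1" using ab[of p] p p0 by simp
      then show False using p by simp
    qed
    then obtain i0 where i0: "i0 < p" "x!i0 = 1" and imin: "\<forall>t<i0. \<not> (t < p \<and> x!t = 1)"
      using exists_least_iff[of "\<lambda>t. t < p \<and> x!t = 1"] by blast
    have ipos: "0 < i0" using i0 x0 by (cases i0) auto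
    have zero: "\<forall>t<i0. x!t = 0"
    proof (intro allI impI)
      fix t assume t: "t < i0"
      then have "x!t \<le> 1" "x!t \<noteq> 1" using imin pre i0 by auto
      then show "x!t = 0" by simp
    qed
    have pS: "p = Suc i0"
    proof (rule ccontr)
      assume "p \<noteq> Suc i0"
      then have lt: "Suc i0 < p" using i0 by simp
      have "x!Suc i0 \<le> 1" using pre lt by simp
      then consider "x!Suc i0 = 0" | "x!Suc i0 = 1" by linarith
      then show False
      proof cases
        case 1
        have "contains x [0,1,0,2]" unfolding c0102
          using 1 lt i0 p x0 len ipos
          by (intro exI[of _ 0] exI[of _ i0] exI[of _ "Suc i0"] exI[of _ p]) auto
        then show False using n2 by simp
      next
        case 2
        have "contains x [0,1,1,2]" unfolding c0112
          using 2 lt i0 p x0 len ipos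
          by (intro exI[of _ 0] exI[of _ i0] exI[of _ "Suc i0"] exI[of _ p]) auto
        then show False using n5 by simp
      qed
    qed
    have xp: "x!p = 2"
    proof -
      have "asc (take (Suc i0) x) + x!0 \<le> x!i0"
        by (rule asc_take_le) (use pS p len zero in auto)
      then have "x!p \<le> 2" using ab[of p] p pS i0 x0 by simp
      then show ?thesis using p by simp
    qed
    have big: "2 \<le> x!t" if "p < t" "t < n" for t
    proof (rule ccontr)
      assume "\<not> 2 \<le> x!t"
      then consider "x!t = 0" | "x!t = 1" by linarith
      then show False
      proof cases
        case 1
        have "contains x [0,1,2,0]" unfolding c0120
          using 1 that i0 xp x0 len ipos
          by (intro exI[of _ 0] exI[of _ i0] exI[of _ p] exI[of _ t]) auto
        then show False using n3 by simp
      next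
        case 2
        have "contains x [0,1,2,1]" unfolding c0121
          using 2 that i0 xp x0 len ipos
          by (intro exI[of _ 0] exI[of _ i0] exI[of _ p] exI[of _ t]) auto
        then show False using n4 by simp
      qed
    qed
    let ?P = "\<lambda>j. p \<le> j \<and> (Suc j = n \<or> x!Suc j \<noteq> Suc (x!j))"
    have "?P (n - 1)" using p by auto
    then obtain j where j: "?P j" and jmin: "\<forall>m<j. \<not> ?P m"
      using exists_least_iff[of ?P] by blast
    have jn: "j < n"
    proof (rule ccontr)
      assume "\<not> j < n"
      then have "n - 1 < j" using p by simp
      then show False using jmin \<open>?P (n - 1)\<close> by blast
    qed
    define f where "f = (\<lambda>t::nat. if t < i0 then 0 else t - i0 + 1)"
    have inc: "t \<le> j \<Longrightarrow> x!t = f t" for t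
    proof (induction t)
      case 0
      then show ?case using x0 ipos by (simp add: f_def)
    next
      case (Suc t)
      consider "Suc t < i0" | "Suc t = i0" | "Suc t = p" | "p < Suc t" using pS by linarith
      then show ?case
      proof cases
        case 1
        then show ?thesis using zero by (simp add: f_def)
      next
        case 2
        then show ?thesis using i0 by (simp add: f_def)
      next
        case 3
        then show ?thesis using xp pS by (simp add: f_def)
      next
        case 4
        have "\<not> ?P t" using jmin Suc.prems by simp
        then have "x!Suc t = Suc (x!t)" using 4 jn Suc.prems by auto
        then show ?thesis using Suc 4 pS by (simp add: f_def)
      qed
    qed
    define K where "K = j - i0 + 1"
    have xj: "x!j = K" using inc[of j] j pS by (simp add: f_def K_def)
    have K2: "2 \<le> K"
    proof -
      have "Suc i0 \<le> j" using j pS by simp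
      then show ?thesis unfolding K_def by linarith
    qed
    have fmono: "\<forall>m<j. x!m \<le> x!Suc m"
      using inc by (auto simp: f_def)
    have ge: "K \<le> x!t" if "j < t" "t < n" for t
    proof (rule ccontr)
      assume "\<not> K \<le> x!t"
      then have wK: "x!t < K" by simp
      have w2: "2 \<le> x!t" using big[of t] that j by simp
      define s where "s = x!t + i0 - 1"
      have s1: "p \<le> s" "s < j" using w2 wK pS by (auto simp: s_def K_def)
      have xs: "x!s = x!t" using inc[of s] s1 pS w2 by (simp add: f_def s_def)
      have "contains x [0,1,2,1]" unfolding c0121
        using s1 xs that x0 xj wK w2 len pS
        by (intro exI[of _ 0] exI[of _ s] exI[of _ j] exI[of _ t]) auto
      then show False using n4 by simp
    qed
    have sj: "x!Suc j \<le> K" if "Suc j < n"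
    proof -
      have "asc (take (Suc j) x) + x!0 \<le> x!j" by (rule asc_take_le) (use that fmono len in auto)
      then have "x!Suc j \<le> Suc K" using ab[of "Suc j"] that xj x0 by simp
      moreover have "x!Suc j \<noteq> Suc K" using j that xj by auto
      ultimately show ?thesis by simp
    qed
    have tail: "x!t = K" if "j < t" "t < n" for t
    proof (cases "t = Suc j")
      case True
      then show ?thesis using sj ge that by force
    next
      case False
      then have t2: "Suc j < t" using that by simp
      have xsj: "x!Suc j = K" using sj ge[of "Suc j"] t2 that by force
      show ?thesis
      proof (rule ccontr)
        assume "x!t \<noteq> K"
        then have "K < x!t" using ge that by force
        then have "contains x [0,1,1,2]" unfolding c0112
          using t2 that x0 xj xsj K2 len pS j
          by (intro exI[of _ 0] exI[of _ j] exI[of _ "Suc j"] exI[of _ t]) auto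
        then show False using n5 by simp
      qed
    qed
    have "x = gB2 n i0 j"
    proof (rule nth_equalityI)
      show "length x = length (gB2 n i0 j)" by (simp add: len gB2_len)
      fix t assume "t < length x"
      then have t: "t < n" using len by simp
      show "x!t = gB2 n i0 j ! t"
      proof (cases "t \<le> j")
        case True
        then show ?thesis using inc[of t] t by (simp add: gB2_nth f_def)
      next
        case False
        then show ?thesis using tail[of t] t pS j by (simp add: gB2_nth K_def)
      qed
    qed
    moreover have "(i0, j) \<in> PP n" using ipos i0 pS j jn by (simp add: PP_def)
    ultimately show ?thesis by force
  qed
qed



lemma PP_Suc: "PP (Suc n) = PP n \<union> (\<lambda>i. (i, n)) ` {1..<n}"
  unfolding PP_def by auto

lemma finite_PP: "finite (PP n)"
  by (rule finite_subset[of _ "{..<n} \<times> {..<n}"]) (auto simp: PP_def)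

lemma card_PP: "card (PP n) = (n - 1) choose 2"
proof (induction n)
  case 0
  have "PP 0 = {}" by (auto simp: PP_def)
  then show ?case by simp
next
  case (Suc n)
  have d: "PP n \<inter> (\<lambda>i. (i, n)) ` {1..<n} = {}" by (auto simp: PP_def)
  have ci: "card ((\<lambda>i. (i, n)) ` {1..<n}) = n - 1"
    by (subst card_image) (auto simp: inj_on_def)
  have "card (PP (Suc n)) = card (PP n) + (n - 1)"
    unfolding PP_Suc using card_Un_disjoint[OF finite_PP _ d] ci by simp
  also have "\<dots> = (n - 1 choose 2) + (n - 1)" using Suc by simp
  also have "\<dots> = n choose 2"
  proof (cases n)
    case 0
    then show ?thesis by simp
  next
    case (Suc m)
    have "Suc m choose Suc 1 = (m choose 1) + (m choose Suc 1)" by (rule binomial_Suc_Suc)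
    then show ?thesis using Suc by (simp add: numeral_2_eq_2)
  qed
  finally show ?case by simp
qed

lemma card_atLeastLessThan1: "card (Pow {1..<n}) = 2 ^ (n - 1)"
  by (simp add: card_Pow)

lemma gA1_inj: "inj_on (gA1 n) (Pow {1..<n})"
proof (rule inj_on_inverseI)
  fix S assume S: "S \<in> Pow {1..<n}"
  show "{t\<in>{1..<n}. gA1 n S ! t \<noteq> gA1 n S ! (t - 1)} = S"
  proof (rule set_eqI)
    fix t
    show "t \<in> {t\<in>{1..<n}. gA1 n S ! t \<noteq> gA1 n S ! (t - 1)} \<longleftrightarrow> t \<in> S"
    proof (cases "t \<in> {1..<n}")
      case True
      then obtain r where r: "t = Suc r" by (cases t) auto
      have c: "card (S \<inter> {1..Suc r}) = card (S \<inter> {1..r}) + (if Suc r \<in> S then 1 else 0)"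
        by (rule card_step)
      show ?thesis using True r c by (simp add: gA1_nth)
    next
      case False
      then show ?thesis using S by auto
    qed
  qed
qed

lemma gB1_inj: "inj_on (gB1 n) (Pow {1..<n})"
proof (rule inj_on_inverseI)
  fix S assume S: "S \<in> Pow {1..<n}"
  show "{t\<in>{1..<n}. gB1 n S ! t = 1} = S"
  proof (rule set_eqI)
    fix t
    show "t \<in> {t\<in>{1..<n}. gB1 n S ! t = 1} \<longleftrightarrow> t \<in> S"
    proof (cases "t \<in> {1..<n}")
      case True
      then have "gB1 n S ! t = (if t \<in> S then 1 else 0)" by (simp add: gB1_nth)
      then show ?thesis using True by simp
    next
      case False
      then show ?thesis using S by auto
    qed
  qed
qed

lemma gA2_inj: "inj_on (\<lambda>(i,j). gA2 n i j) (PP n)"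
proof (rule inj_onI)
  fix a b assume a: "a \<in> PP n" and b: "b \<in> PP n" and e: "(\<lambda>(i,j). gA2 n i j) a = (\<lambda>(i,j). gA2 n i j) b"
  obtain i j where aa: "a = (i,j)" by (cases a)
  obtain i' j' where bb: "b = (i',j')" by (cases b)
  have ij: "0 < i" "i < j" "j < n" "0 < i'" "i' < j'" "j' < n" using a b aa bb by (auto simp: PP_def)
  have e2: "gA2 n i j = gA2 n i' j'" using e aa bb by simp
  have h: "(if i \<le> t \<and> t < j then 1 else 0) = (if i' \<le> t \<and> t < j' then (1::nat) else 0)" if "t < n" for t
    using arg_cong[OF e2, of "\<lambda>x. x ! t"] that by (simp add: gA2_nth)
  have ii: "i = i'"
  proof (rule ccontr)
    assume "i \<noteq> i'"
    then consider "i < i'" | "i' < i" by linarith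
    then show False
    proof cases
      case 1 then show False using h[of i] ij by simp
    next
      case 2 then show False using h[of i'] ij by simp
    qed
  qed
  have "j = j'"
  proof (rule ccontr)
    assume "j \<noteq> j'"
    then consider "j < j'" | "j' < j" by linarith
    then show False
    proof cases
      case 1 then show False using h[of j] ij ii by simp
    next
      case 2 then show False using h[of j'] ij ii by simp
    qed
  qed
  then show "a = b" using aa bb ii by simp
qed

lemma gB2_inj: "inj_on (\<lambda>(i,j). gB2 n i j) (PP n)"
proof (rule inj_onI)
  fix a b assume a: "a \<in> PP n" and b: "b \<in> PP n" and e: "(\<lambda>(i,j). gB2 n i j) a = (\<lambda>(i,j). gB2 n i j) b"
  obtain i j where aa: "a = (i,j)" by (cases a)
  obtain i' j' where bb: "b = (i',j')" by (cases b)
  have ij: "0 < i" "i < j" "j < n" "0 < i'" "i' < j'" "j' < n" using a b aa bb by (auto simp: PP_def)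
  have e2: "gB2 n i j = gB2 n i' j'" using e aa bb by simp
  have h: "(if t < i then 0 else if t \<le> j then t - i + 1 else j - i + 1) =
           (if t < i' then 0 else if t \<le> j' then t - i' + 1 else j' - i' + (1::nat))" if "t < n" for t
    using arg_cong[OF e2, of "\<lambda>x. x ! t"] that by (simp add: gB2_nth)
  have ii: "i = i'"
  proof (rule ccontr)
    assume "i \<noteq> i'"
    then consider "i < i'" | "i' < i" by linarith
    then show False
    proof cases
      case 1 then show False using h[of i] ij by simp
    next
      case 2 then show False using h[of i'] ij by simp
    qed
  qed
  have "j = j'"
  proof (rule ccontr)
    assume "j \<noteq> j'"
    then consider "j < j'" | "j' < j" by linarith
    then show False
    proof cases
      case 1 then show False using h[of "Suc j"] ij ii by simp
    next
      case 2 then show False using h[of "Suc j'"] ij ii by simp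
    qed
  qed
  then show "a = b" using aa bb ii by simp
qed

lemma disjA: "gA1 n ` Pow {1..<n} \<inter> (\<lambda>(i,j). gA2 n i j) ` PP n = {}"
proof (rule ccontr)
  assume "gA1 n ` Pow {1..<n} \<inter> (\<lambda>(i,j). gA2 n i j) ` PP n \<noteq> {}"
  then obtain S i j where ij: "(i,j) \<in> PP n" and e: "gA1 n S = gA2 n i j" by auto
  have c: "0 < i" "i < j" "j < n" using ij by (auto simp: PP_def)
  have "gA1 n S ! (j - 1) \<le> gA1 n S ! j"
    using steps01_mono[OF gA1_steps, of "j - 1" j n S] c by (simp add: gA1_len)
  moreover have "gA2 n i j ! (j - 1) = 1"
  proof -
    have "i \<le> j - 1" "j - 1 < n" "j - 1 < j" using c by auto
    then show ?thesis by (simp add: gA2_nth)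
  qed
  moreover have "gA2 n i j ! j = 0" using c by (simp add: gA2_nth)
  ultimately show False using e by simp
qed

lemma disjB: "gB1 n ` Pow {1..<n} \<inter> (\<lambda>(i,j). gB2 n i j) ` PP n = {}"
proof (rule ccontr)
  assume "gB1 n ` Pow {1..<n} \<inter> (\<lambda>(i,j). gB2 n i j) ` PP n \<noteq> {}"
  then obtain S i j where ij: "(i,j) \<in> PP n" and e: "gB1 n S = gB2 n i j" by auto
  have c: "0 < i" "i < j" "j < n" using ij by (auto simp: PP_def)
  have "gB1 n S ! Suc i \<le> 1" using c by (simp add: gB1_nth)
  moreover have "gB2 n i j ! Suc i = 2" using c by (simp add: gB2_nth)
  ultimately show False using e by simp
qed

lemma setA: "0 < n \<Longrightarrow> {x. length x = n \<and> ascent_seq x \<and>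
   (\<forall>p\<in>{[0,1,0,1], [0,1,0,2], [0,1,2,0], [0,1,2,1]}. avoids x p)}
   = gA1 n ` Pow {1..<n} \<union> (\<lambda>(i,j). gA2 n i j) ` PP n"
proof (rule equalityI)
  assume n: "0 < n"
  show "{x. length x = n \<and> ascent_seq x \<and>
   (\<forall>p\<in>{[0,1,0,1], [0,1,0,2], [0,1,2,0], [0,1,2,1]}. avoids x p)} \<subseteq> gA1 n ` Pow {1..<n} \<union> (\<lambda>(i,j). gA2 n i j) ` PP n"
  proof
    fix x assume "x \<in> {x. length x = n \<and> ascent_seq x \<and>
      (\<forall>p\<in>{[0,1,0,1], [0,1,0,2], [0,1,2,0], [0,1,2,1]}. avoids x p)}"
    then have h: "length x = n" "ascent_seq x" "\<forall>p\<in>{[0,1,0,1], [0,1,0,2], [0,1,2,0], [0,1,2,1]}. avoids x p"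
      by blast+
    have "\<not> contains x [0,1,0,1]" "\<not> contains x [0,1,0,2]" "\<not> contains x [0,1,2,0]" "\<not> contains x [0,1,2,1]"
      using h(3) unfolding avoids_def by blast+
    then show "x \<in> gA1 n ` Pow {1..<n} \<union> (\<lambda>(i,j). gA2 n i j) ` PP n"
      using A_sub[OF h(1,2)] by blast
  qed
  show "gA1 n ` Pow {1..<n} \<union> (\<lambda>(i,j). gA2 n i j) ` PP n \<subseteq> {x. length x = n \<and> ascent_seq x \<and>
   (\<forall>p\<in>{[0,1,0,1], [0,1,0,2], [0,1,2,0], [0,1,2,1]}. avoids x p)}"
  proof
    fix x assume "x \<in> gA1 n ` Pow {1..<n} \<union> (\<lambda>(i,j). gA2 n i j) ` PP n"
    then show "x \<in> {x. length x = n \<and> ascent_seq x \<and>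
      (\<forall>p\<in>{[0,1,0,1], [0,1,0,2], [0,1,2,0], [0,1,2,1]}. avoids x p)}"
    proof (elim UnE imageE)
      fix S assume "x = gA1 n S" "S \<in> Pow {1..<n}"
      then show ?thesis using inA_1[OF _ n, of S] by simp
    next
      fix ij assume e: "x = (\<lambda>(i,j). gA2 n i j) ij" and m: "ij \<in> PP n"
      obtain i j where ij: "ij = (i,j)" by (cases ij)
      show ?thesis using inA_2[of i j n] e m ij by simp
    qed
  qed
qed

lemma setB: "0 < n \<Longrightarrow> {x. length x = n \<and> ascent_seq x \<and>
   (\<forall>p\<in>{[0,1,0,2], [0,1,1,2], [0,1,2,0], [0,1,2,1]}. avoids x p)}
   = gB1 n ` Pow {1..<n} \<union> (\<lambda>(i,j). gB2 n i j) ` PP n"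
proof (rule equalityI)
  assume n: "0 < n"
  show "{x. length x = n \<and> ascent_seq x \<and>
   (\<forall>p\<in>{[0,1,0,2], [0,1,1,2], [0,1,2,0], [0,1,2,1]}. avoids x p)} \<subseteq> gB1 n ` Pow {1..<n} \<union> (\<lambda>(i,j). gB2 n i j) ` PP n"
  proof
    fix x assume "x \<in> {x. length x = n \<and> ascent_seq x \<and>
      (\<forall>p\<in>{[0,1,0,2], [0,1,1,2], [0,1,2,0], [0,1,2,1]}. avoids x p)}"
    then have h: "length x = n" "ascent_seq x" "\<forall>p\<in>{[0,1,0,2], [0,1,1,2], [0,1,2,0], [0,1,2,1]}. avoids x p"
      by blast+
    have "\<not> contains x [0,1,0,2]" "\<not> contains x [0,1,1,2]" "\<not> contains x [0,1,2,0]" "\<not> contains x [0,1,2,1]"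
      using h(3) unfolding avoids_def by blast+
    then show "x \<in> gB1 n ` Pow {1..<n} \<union> (\<lambda>(i,j). gB2 n i j) ` PP n"
      using B_sub[OF h(1,2)] by blast
  qed
  show "gB1 n ` Pow {1..<n} \<union> (\<lambda>(i,j). gB2 n i j) ` PP n \<subseteq> {x. length x = n \<and> ascent_seq x \<and>
   (\<forall>p\<in>{[0,1,0,2], [0,1,1,2], [0,1,2,0], [0,1,2,1]}. avoids x p)}"
  proof
    fix x assume "x \<in> gB1 n ` Pow {1..<n} \<union> (\<lambda>(i,j). gB2 n i j) ` PP n"
    then show "x \<in> {x. length x = n \<and> ascent_seq x \<and>
      (\<forall>p\<in>{[0,1,0,2], [0,1,1,2], [0,1,2,0], [0,1,2,1]}. avoids x p)}"
    proof (elim UnE imageE)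
      fix S assume "x = gB1 n S" "S \<in> Pow {1..<n}"
      then show ?thesis using inB_1[OF _ n, of S] by simp
    next
      fix ij assume e: "x = (\<lambda>(i,j). gB2 n i j) ij" and m: "ij \<in> PP n"
      obtain i j where ij: "ij = (i,j)" by (cases ij)
      show ?thesis using inB_2[of i j n] e m ij by simp
    qed
  qed
qed

theorem theorem5p2:
  fixes n :: nat
  assumes "n \<ge> 1"
  shows "a_count {[0,1,0,1], [0,1,0,2], [0,1,2,0], [0,1,2,1]} n = 2 ^ (n - 1) + (n - 1 choose 2)
       \<and> a_count {[0,1,0,2], [0,1,1,2], [0,1,2,0], [0,1,2,1]} n = 2 ^ (n - 1) + (n - 1 choose 2)"
proof
  have n: "0 < n" using assms by simp
  have f1: "finite (gA1 n ` Pow {1..<n})" by simp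
  have f2: "finite ((\<lambda>(i,j). gA2 n i j) ` PP n)" using finite_PP by simp
  have "card (gA1 n ` Pow {1..<n} \<union> (\<lambda>(i,j). gA2 n i j) ` PP n)
        = card (gA1 n ` Pow {1..<n}) + card ((\<lambda>(i,j). gA2 n i j) ` PP n)"
    by (rule card_Un_disjoint[OF f1 f2 disjA])
  also have "\<dots> = 2 ^ (n - 1) + (n - 1 choose 2)"
    using card_image[OF gA1_inj, of n] card_image[OF gA2_inj, of n] card_PP[of n] card_atLeastLessThan1[of n]
    by simp
  finally show "a_count {[0,1,0,1], [0,1,0,2], [0,1,2,0], [0,1,2,1]} n = 2 ^ (n - 1) + (n - 1 choose 2)"
    unfolding a_count_def setA[OF n] .
next
  have n: "0 < n" using assms by simp
  have f1: "finite (gB1 n ` Pow {1..<n})" by simp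
  have f2: "finite ((\<lambda>(i,j). gB2 n i j) ` PP n)" using finite_PP by simp
  have "card (gB1 n ` Pow {1..<n} \<union> (\<lambda>(i,j). gB2 n i j) ` PP n)
        = card (gB1 n ` Pow {1..<n}) + card ((\<lambda>(i,j). gB2 n i j) ` PP n)"
    by (rule card_Un_disjoint[OF f1 f2 disjB])
  also have "\<dots> = 2 ^ (n - 1) + (n - 1 choose 2)"
    using card_image[OF gB1_inj, of n] card_image[OF gB2_inj, of n] card_PP[of n] card_atLeastLessThan1[of n]
    by simp
  finally show "a_count {[0,1,0,2], [0,1,1,2], [0,1,2,0], [0,1,2,1]} n = 2 ^ (n - 1) + (n - 1 choose 2)"
    unfolding a_count_def setB[OF n] .
qed

end
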